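(* Let $r>1$ and $a>1$. There is a constant $c=c(r)$ such that for every $f\in\mathcal{F}_r$, every $s\in[1,a]$, and every $x\in\mathbb{C}^n$, $t>0$ with $$B_c(x,t)\subset B_c(x,at)\subset B_c(0,1),$$ one has $$\sup_{B_c(x,st)} f\le c\log s+\sup_{B_c(x,t)} f .$$
   Context: $B_c(x,\rho)$ denotes the Euclidean ball in $\mathbb{C}^n$ with center $x$ and radius $\rho$. For $r>1$, $\mathcal{F}_r$ is the class of plurisubharmonic functions $f:\mathbb{C}^n\to\mathbb{R}$ with $\sup_{B_c(0,r)}f=0$ and $\sup_{B_c(0,1)}f\ge -1$. *)

theory Defs
  imports "HOL-Analysis.Analysis"
begin

definition upper_semicont :: "('a::topological_space \<Rightarrow> real) \<Rightarrow> bool" where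
  "upper_semicont f \<longleftrightarrow> (\<forall>x. \<forall>e>0. eventually (\<lambda>y. f y < f x + e) (at x))"

text \<open>Plurisubharmonic functions f : C^n -> R: upper semicontinuous and satisfying
  the sub-mean value inequality on every complex disc {a + zeta b : |zeta| <= 1},
  i.e. the restriction to every complex line is subharmonic.\<close>
definition psh :: "(complex ^ 'n \<Rightarrow> real) \<Rightarrow> bool" where
  "psh f \<longleftrightarrow> upper_semicont f \<and>
     (\<forall>a b. (\<lambda>\<theta>. f (a + exp (\<i> * of_real \<theta>) *s b)) integrable_on {0..2*pi} \<and>
            f a \<le> (1 / (2*pi)) * integral {0..2*pi} (\<lambda>\<theta>. f (a + exp (\<i> * of_real \<theta>) *s b)))"

text \<open>The class F_r; B_c(x,rho) is the open Euclidean ball, ball x rho.\<close>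
definition F_class :: "real \<Rightarrow> (complex ^ 'n \<Rightarrow> real) set" where
  "F_class r = {f. psh f \<and> Sup (f ` ball 0 r) = 0 \<and> Sup (f ` ball 0 1) \<ge> -1}"

end

theory Submission
  imports Defs "HOL-Complex_Analysis.Complex_Analysis"
begin

lemma holo_mean:
  fixes g :: "complex \<Rightarrow> complex"
  assumes "g holomorphic_on ball 0 R" "R > 1"
  shows "((\<lambda>t. g (cis t)) has_integral (2 * pi * g 0)) {0..2*pi}"
proof -
  have sub1: "cball 0 1 \<subseteq> ball (0::complex) R" using assms(2) by auto
  have sub2: "ball 0 1 \<subseteq> ball (0::complex) R" using assms(2) by auto
  have c: "continuous_on (cball 0 1) g"
    using holomorphic_on_imp_continuous_on[OF holomorphic_on_subset[OF assms(1) sub1]] .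
  have h: "g holomorphic_on ball 0 1" using holomorphic_on_subset[OF assms(1) sub2] .
  have "((\<lambda>u. g u / (u - 0)) has_contour_integral (2 * of_real pi * \<i> * g 0)) (circlepath 0 1)"
    by (rule Cauchy_integral_circlepath[OF c h]) simp
  then have "((\<lambda>t. g (0 + 1 * cis t) / (0 + 1 * cis t - 0) * 1 * \<i> * cis t) has_integral (2 * of_real pi * \<i> * g 0)) {0..2*pi}"
    unfolding circlepath_def by (subst (asm) has_contour_integral_part_circlepath_iff) auto
  moreover have e: "\<And>t. g (0 + 1 * cis t) / (0 + 1 * cis t - 0) * 1 * \<i> * cis t = \<i> * g (cis t)"
    by (simp add: cis_neq_zero)
  ultimately have "((\<lambda>t. \<i> * g (cis t)) has_integral (2 * of_real pi * \<i> * g 0)) {0..2*pi}"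
    by (simp add: mult.commute)
  from has_integral_mult_right[OF this, of "-\<i>"]
  have H: "((\<lambda>t. (-\<i>) * (\<i> * g (cis t))) has_integral (-\<i>) * (2 * of_real pi * \<i> * g 0)) {0..2*pi}" .
  have E1: "(-\<i>) * (2 * of_real pi * \<i> * g 0) = 2 * pi * g 0"
    by (metis (no_types, lifting) complex_i_mult_minus minus_minus mult.assoc mult.commute mult.left_commute of_real_mult of_real_numeral)
  have E2: "\<And>t. (-\<i>) * (\<i> * g (cis t)) = g (cis t)"
    by (metis complex_i_mult_minus minus_minus mult.assoc mult_minus_left)
  show ?thesis using H unfolding E1 E2 .
qed

lemma log_mean:
  fixes a b :: complex
  assumes "a \<noteq> 0" "cmod b < cmod a"
  shows "((\<lambda>\<theta>. ln (cmod (a + exp (\<i> * of_real \<theta>) * b))) has_integral (2*pi*ln (cmod a))) {0..2*pi}"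
proof -
  define q where "q = b / a"
  have q1: "cmod q < 1" using assms by (simp add: q_def norm_divide divide_less_eq)
  define R where "R = 2 / (1 + cmod q)"
  have qp: "0 < 1 + cmod q" by (smt (verit) norm_ge_zero)
  have R1: "R > 1" using q1 qp by (simp add: R_def less_divide_eq)
  have qR: "cmod q * R < 1" using q1 qp by (simp add: R_def divide_less_eq)
  have nz: "1 + q * u \<notin> \<real>\<^sub>\<le>\<^sub>0" if "cmod u < R" for u
  proof -
    have "cmod (q*u) < 1"
    proof -
      have "cmod (q*u) = cmod q * cmod u" by (simp add: norm_mult)
      also have "\<dots> \<le> cmod q * R" using that by (intro mult_left_mono) auto
      finally show ?thesis using qR by simp
    qed
    then have "Re (q*u) > -1" using abs_Re_le_cmod[of "q*u"] by linarith
    then have "Re (1 + q*u) > 0" by simp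
    then show ?thesis by (auto simp: complex_nonpos_Reals_iff)
  qed
  have hol: "(\<lambda>u. Ln (1 + q * u)) holomorphic_on ball 0 R"
    by (intro holomorphic_intros) (use nz in auto)
  from holo_mean[OF hol R1]
  have "((\<lambda>t. Ln (1 + q * cis t)) has_integral 0) {0..2*pi}" by simp
  from has_integral_linear[OF this bounded_linear_Re]
  have I: "((\<lambda>t. Re (Ln (1 + q * cis t))) has_integral 0) {0..2*pi}" by (simp add: o_def)
  have nz2: "1 + q * cis t \<noteq> 0" for t using nz[of "cis t"] R1 by auto
  have E: "ln (cmod (a + exp (\<i> * of_real t) * b)) = ln (cmod a) + Re (Ln (1 + q * cis t))" for t
  proof -
    have "a + exp (\<i> * of_real t) * b = a * (1 + q * cis t)"
      using assms(1) by (simp add: q_def cis_conv_exp field_simps)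
    then have "cmod (a + exp (\<i> * of_real t) * b) = cmod a * cmod (1 + q * cis t)"
      by (simp add: norm_mult)
    then show ?thesis using assms(1) nz2[of t] by (simp add: ln_mult)
  qed
  have "((\<lambda>t. ln (cmod a) + Re (Ln (1 + q * cis t))) has_integral (ln (cmod a) * (2*pi) + 0)) {0..2*pi}"
    by (intro has_integral_add I) (use has_integral_const_real[of "ln (cmod a)" 0 "2*pi"] in \<open>simp add: mult.commute\<close>)
  then have F: "((\<lambda>t. ln (cmod a) + Re (Ln (1 + q * cis t))) has_integral (2*pi*ln (cmod a))) {0..2*pi}"
    by (simp add: mult.commute)
  have E': "(\<lambda>\<theta>. ln (cmod (a + exp (\<i> * of_real \<theta>) * b))) = (\<lambda>t. ln (cmod a) + Re (Ln (1 + q * cis t)))"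
    by (rule ext) (rule E)
  show ?thesis unfolding E' by (rule F)
qed

lemma sq_expand:
  fixes a b :: complex
  shows "(cmod (a + exp (\<i> * of_real t) * b))^2 = ((cmod a)^2 + (cmod b)^2) + 2 * Re (cnj a * b * cis t)"
proof -
  have s: "sin t * sin t = 1 - cos t * cos t" using sin_squared_eq[of t] by (simp add: power2_eq_square)
  have ca: "\<And>z. cmod z * cmod z = Re z * Re z + Im z * Im z" using cmod_power2 by (simp add: power2_eq_square)
  have "exp (\<i> * of_real t) = cis t" by (simp add: cis_conv_exp)
  then have "(cmod (a + exp (\<i> * of_real t) * b))^2 = (Re (a + cis t * b))^2 + (Im (a + cis t * b))^2"
    by (simp only: cmod_power2)
  also have "\<dots> = ((cmod a)^2 + (cmod b)^2) + 2 * Re (cnj a * b * cis t)"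
    by (simp add: cmod_power2 power2_eq_square algebra_simps s ca)
  finally show ?thesis .
qed

lemma sq_mean:
  fixes a b :: complex
  shows "((\<lambda>\<theta>. (cmod (a + exp (\<i> * of_real \<theta>) * b))^2) has_integral (2*pi*((cmod a)^2 + (cmod b)^2))) {0..2*pi}"
proof -
  have hol: "(\<lambda>u. cnj a * b * u) holomorphic_on ball 0 2"
    by (intro holomorphic_intros)
  from holo_mean[OF hol]
  have "((\<lambda>t. cnj a * b * cis t) has_integral 0) {0..2*pi}" by simp
  from has_integral_linear[OF this bounded_linear_Re]
  have I: "((\<lambda>t. Re (cnj a * b * cis t)) has_integral 0) {0..2*pi}" by (simp add: o_def)
  note E = sq_expand[of a _ b]
  have "((\<lambda>t. ((cmod a)^2 + (cmod b)^2) + 2 * Re (cnj a * b * cis t)) has_integral (((cmod a)^2 + (cmod b)^2) * (2*pi) + 2 * 0)) {0..2*pi}"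
    by (intro has_integral_add has_integral_mult_right I) (use has_integral_const_real[of "(cmod a)^2 + (cmod b)^2" 0 "2*pi"] in \<open>simp add: mult.commute\<close>)
  then have F: "((\<lambda>t. ((cmod a)^2 + (cmod b)^2) + 2 * Re (cnj a * b * cis t)) has_integral (2*pi*((cmod a)^2 + (cmod b)^2))) {0..2*pi}"
    by (simp add: mult.commute)
  have E': "(\<lambda>\<theta>. (cmod (a + exp (\<i> * of_real \<theta>) * b))^2) = (\<lambda>t. ((cmod a)^2 + (cmod b)^2) + 2 * Re (cnj a * b * cis t))"
    by (rule ext) (rule E)
  show ?thesis unfolding E' by (rule F)
qed

definition usc_at :: "('a::topological_space \<Rightarrow> real) \<Rightarrow> 'a \<Rightarrow> bool" where
  "usc_at v z \<longleftrightarrow> (\<forall>e>0. eventually (\<lambda>w. v w < v z + e) (at z))"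

lemma usc_max:
  fixes v :: "'a::topological_space \<Rightarrow> real"
  assumes K: "compact K" "K \<noteq> {}" and u: "\<And>z. z \<in> K \<Longrightarrow> usc_at v z"
  shows "\<exists>z\<in>K. \<forall>w\<in>K. v w \<le> v z"
proof (rule ccontr)
  assume "\<not> ?thesis"
  then have "\<forall>z\<in>K. \<exists>w\<in>K. v z < v w" by (auto simp: not_le)
  then obtain nx where nx: "\<And>z. z \<in> K \<Longrightarrow> nx z \<in> K \<and> v z < v (nx z)" by metis
  have "\<exists>T. open T \<and> z \<in> T \<and> (\<forall>w\<in>T. v w < v (nx z))" if z: "z \<in> K" for z
  proof -
    have d: "v (nx z) - v z > 0" using nx[OF z] by auto
    have "eventually (\<lambda>w. v w < v z + (v (nx z) - v z)) (at z)"
      using u[OF z] d unfolding usc_at_def by blast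
    then have "eventually (\<lambda>w. v w < v (nx z)) (at z)" by simp
    then obtain S where S: "open S" "z \<in> S" "\<And>w. w \<in> S \<Longrightarrow> w \<noteq> z \<Longrightarrow> v w < v (nx z)"
      unfolding eventually_at_topological by auto
    show ?thesis using S nx[OF z] by (intro exI[of _ S]) auto
  qed
  then obtain T where T: "\<And>z. z \<in> K \<Longrightarrow> open (T z) \<and> z \<in> T z \<and> (\<forall>w\<in>T z. v w < v (nx z))"
    by metis
  have "K \<subseteq> (\<Union>z\<in>K. T z)" using T by blast
  from compactE_image[OF K(1) _ this] T
  obtain C where C: "C \<subseteq> K" "finite C" "K \<subseteq> (\<Union>z\<in>C. T z)" by blast
  have "C \<noteq> {}" using C K(2) by blast
  define m where "m = Max ((\<lambda>z. v (nx z)) ` C)"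
  have "m \<in> (\<lambda>z. v (nx z)) ` C" unfolding m_def using C(2) \<open>C \<noteq> {}\<close> by (intro Max_in) auto
  then obtain z1 where z1: "z1 \<in> C" "v (nx z1) = m" by auto
  have "nx z1 \<in> K" using nx z1 C by blast
  then obtain z2 where z2: "z2 \<in> C" "nx z1 \<in> T z2" using C(3) by blast
  have "v (nx z1) < v (nx z2)" using T z2 C by blast
  moreover have "v (nx z2) \<le> m" unfolding m_def using C(2) z2 by (intro Max_ge) auto
  ultimately show False using z1 by simp
qed

lemma usc_at_add_cont:
  fixes u g :: "'a::metric_space \<Rightarrow> real"
  assumes "usc_at u z" "continuous (at z) g"
  shows "usc_at (\<lambda>w. u w + g w) z"
  unfolding usc_at_def
proof (intro allI impI)
  fix e :: real assume e: "e > 0"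
  have 1: "eventually (\<lambda>w. u w < u z + e/2) (at z)" using assms(1) e unfolding usc_at_def by auto
  have "(g \<longlongrightarrow> g z) (at z)" using assms(2) by (simp add: continuous_at)
  then have 2: "eventually (\<lambda>w. dist (g w) (g z) < e/2) (at z)" using e unfolding tendsto_iff by (meson half_gt_zero)
  show "eventually (\<lambda>w. u w + g w < u z + g z + e) (at z)"
    using eventually_conj[OF 1 2]
  proof eventually_elim
    case (elim w)
    from elim have a: "u w < u z + e/2" and b: "dist (g w) (g z) < e/2" by auto
    from b have "g w - g z < e/2" unfolding dist_real_def by arith
    with a show ?case by linarith
  qed
qed

definition subh :: "(complex \<Rightarrow> real) \<Rightarrow> bool" where
  "subh u \<longleftrightarrow> (\<forall>z. usc_at u z) \<and>
     (\<forall>a b. (\<lambda>\<theta>. u (a + exp (\<i> * of_real \<theta>) * b)) integrable_on {0..2*pi} \<and>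
        u a \<le> 1 / (2*pi) * integral {0..2*pi} (\<lambda>\<theta>. u (a + exp (\<i> * of_real \<theta>) * b)))"

lemma MP_core:
  fixes u :: "complex \<Rightarrow> real"
  assumes su: "subh u" and r1: "0 < \<rho>1" and r12: "\<rho>1 < \<rho>2"
    and bd1: "\<And>\<zeta>. cmod \<zeta> = \<rho>1 \<Longrightarrow> u \<zeta> - \<alpha> * ln (cmod \<zeta>) \<le> m"
    and bd2: "\<And>\<zeta>. cmod \<zeta> = \<rho>2 \<Longrightarrow> u \<zeta> - \<alpha> * ln (cmod \<zeta>) \<le> m"
    and e: "\<epsilon> > 0"
    and z: "\<rho>1 \<le> cmod \<zeta>" "cmod \<zeta> \<le> \<rho>2"
  shows "u \<zeta> - \<alpha> * ln (cmod \<zeta>) \<le> m + \<epsilon> * \<rho>2^2"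
proof -
  define K where "K = cball (0::complex) \<rho>2 \<inter> - ball 0 \<rho>1"
  have Kc: "compact K" unfolding K_def by (intro compact_Int_closed) auto
  have K_iff: "x \<in> K \<longleftrightarrow> \<rho>1 \<le> cmod x \<and> cmod x \<le> \<rho>2" for x by (auto simp: K_def)
  have "of_real \<rho>1 \<in> K" using r1 r12 by (simp add: K_iff)
  then have Kne: "K \<noteq> {}" by auto
  define w where "w = (\<lambda>x. u x + (- \<alpha> * ln (cmod x) + \<epsilon> * (cmod x)^2))"
  have uscw: "usc_at w x" if "x \<in> K" for x
  proof -
    have "x \<noteq> 0" using that r1 by (auto simp: K_iff)
    then have "continuous (at x) (\<lambda>x. - \<alpha> * ln (cmod x) + \<epsilon> * (cmod x)^2)"
      by (intro continuous_intros) auto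
    moreover have "usc_at u x" using su by (simp add: subh_def)
    ultimately show ?thesis unfolding w_def by (rule usc_at_add_cont[rotated])
  qed
  obtain z0 where z0: "z0 \<in> K" and z0max: "\<And>x. x \<in> K \<Longrightarrow> w x \<le> w z0"
    using usc_max[OF Kc Kne uscw] by blast
  have wz0: "w z0 \<le> m + \<epsilon> * \<rho>2^2"
  proof (cases "cmod z0 = \<rho>1 \<or> cmod z0 = \<rho>2")
    case True
    then have "u z0 - \<alpha> * ln (cmod z0) \<le> m" using bd1 bd2 by auto
    moreover have "(cmod z0)^2 \<le> \<rho>2^2" using z0 by (auto simp: K_iff intro!: power_mono)
    then have "\<epsilon> * (cmod z0)^2 \<le> \<epsilon> * \<rho>2^2" using e by (intro mult_left_mono) auto
    ultimately show ?thesis unfolding w_def by linarith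
  next
    case False
    then have zi: "\<rho>1 < cmod z0" "cmod z0 < \<rho>2" using z0 by (auto simp: K_iff)
    define \<delta> where "\<delta> = min (cmod z0 - \<rho>1) (\<rho>2 - cmod z0)"
    have dpos: "\<delta> > 0" using zi by (simp add: \<delta>_def)
    have z0nz: "z0 \<noteq> 0" using zi r1 by auto
    let ?b = "complex_of_real \<delta>"
    define pt where "pt = (\<lambda>\<theta>::real. z0 + exp (\<i> * of_real \<theta>) * ?b)"
    have nb: "cmod (exp (\<i> * of_real \<theta>) * ?b) = \<delta>" for \<theta>
      using dpos by (simp add: norm_mult)
    have ptK: "pt \<theta> \<in> K" for \<theta>
    proof -
      have "cmod (pt \<theta>) \<le> cmod z0 + \<delta>" unfolding pt_def using norm_triangle_ineq[of z0 "exp (\<i> * of_real \<theta>) * ?b"] nb[of \<theta>] by simp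
      moreover have "cmod z0 - \<delta> \<le> cmod (pt \<theta>)" unfolding pt_def using norm_triangle_ineq2[of z0 "- (exp (\<i> * of_real \<theta>) * ?b)"] nb[of \<theta>] by simp
      ultimately show ?thesis unfolding K_iff \<delta>_def by linarith
    qed
    have Iu: "(\<lambda>\<theta>. u (pt \<theta>)) integrable_on {0..2*pi}"
      and mu: "u z0 \<le> 1 / (2*pi) * integral {0..2*pi} (\<lambda>\<theta>. u (pt \<theta>))"
      using su unfolding subh_def pt_def by blast+
    define J where "J = integral {0..2*pi} (\<lambda>\<theta>. u (pt \<theta>))"
    have hu: "((\<lambda>\<theta>. u (pt \<theta>)) has_integral J) {0..2*pi}" using Iu J_def by auto
    have hl: "((\<lambda>\<theta>. ln (cmod (pt \<theta>))) has_integral (2*pi*ln (cmod z0))) {0..2*pi}"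
      unfolding pt_def by (rule log_mean) (use z0nz dpos \<delta>_def zi r1 in auto)
    have hs: "((\<lambda>\<theta>. (cmod (pt \<theta>))^2) has_integral (2*pi*((cmod z0)^2 + \<delta>^2))) {0..2*pi}"
      unfolding pt_def using sq_mean[of z0 ?b] dpos by simp
    have hw: "((\<lambda>\<theta>. w (pt \<theta>)) has_integral (J + (- \<alpha> * (2*pi*ln (cmod z0)) + \<epsilon> * (2*pi*((cmod z0)^2 + \<delta>^2))))) {0..2*pi}"
      unfolding w_def
      by (intro has_integral_add hu has_integral_mult_right hl hs)
    have hc: "((\<lambda>\<theta>. w z0) has_integral (w z0 * (2*pi))) {0..2*pi}"
      using has_integral_const_real[of "w z0" 0 "2*pi"] by (simp add: mult.commute)
    have le: "J + (- \<alpha> * (2*pi*ln (cmod z0)) + \<epsilon> * (2*pi*((cmod z0)^2 + \<delta>^2))) \<le> w z0 * (2*pi)"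
      by (rule has_integral_le[OF hw hc]) (use z0max ptK in auto)
    have "u z0 * (2*pi) \<le> J" using mu unfolding J_def by (simp add: field_simps)
    then have "w z0 * (2*pi) \<le> J + (- \<alpha> * (2*pi*ln (cmod z0)) + \<epsilon> * (2*pi*(cmod z0)^2))"
      unfolding w_def by (simp add: algebra_simps)
    with le have "\<epsilon> * (2*pi*\<delta>^2) \<le> 0" by (simp add: algebra_simps)
    moreover have "\<epsilon> * (2*pi*\<delta>^2) > 0" using e dpos by simp
    ultimately show ?thesis by simp
  qed
  have zK: "\<zeta> \<in> K" using z by (simp add: K_iff)
  have "u \<zeta> - \<alpha> * ln (cmod \<zeta>) \<le> w \<zeta>" unfolding w_def using e by simp
  also have "\<dots> \<le> w z0" using z0max[OF zK] .
  finally show ?thesis using wz0 by simp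
qed

lemma MP:
  fixes u :: "complex \<Rightarrow> real"
  assumes su: "subh u" and r1: "0 < \<rho>1" and r12: "\<rho>1 < \<rho>2"
    and bd1: "\<And>\<zeta>. cmod \<zeta> = \<rho>1 \<Longrightarrow> u \<zeta> \<le> A"
    and bd2: "\<And>\<zeta>. cmod \<zeta> = \<rho>2 \<Longrightarrow> u \<zeta> \<le> B"
    and z: "\<rho>1 \<le> cmod \<zeta>" "cmod \<zeta> \<le> \<rho>2"
  shows "u \<zeta> \<le> A + (B - A) * ln (cmod \<zeta> / \<rho>1) / ln (\<rho>2 / \<rho>1)"
proof -
  define L where "L = ln \<rho>2 - ln \<rho>1"
  have Lp: "L > 0" using r1 r12 by (simp add: L_def)
  define \<alpha> where "\<alpha> = (B - A) / L"
  define m where "m = A - \<alpha> * ln \<rho>1"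
  have BA: "B - A = \<alpha> * L" using Lp by (simp add: \<alpha>_def)
  have m2: "B - \<alpha> * ln \<rho>2 = m" unfolding m_def using BA by (simp add: L_def algebra_simps)
  have b1: "u x - \<alpha> * ln (cmod x) \<le> m" if "cmod x = \<rho>1" for x
    using bd1[OF that] that by (simp add: m_def)
  have b2: "u x - \<alpha> * ln (cmod x) \<le> m" if "cmod x = \<rho>2" for x
    using bd2[OF that] that m2 by simp
  have r2: "\<rho>2 > 0" using r1 r12 by simp
  have "u \<zeta> - \<alpha> * ln (cmod \<zeta>) \<le> m"
  proof (rule field_le_epsilon)
    fix e :: real assume e: "e > 0"
    have "u \<zeta> - \<alpha> * ln (cmod \<zeta>) \<le> m + (e / \<rho>2^2) * \<rho>2^2"
      by (rule MP_core[OF su r1 r12 b1 b2 _ z]) (use e r2 in auto)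
    then show "u \<zeta> - \<alpha> * ln (cmod \<zeta>) \<le> m + e" using r2 by simp
  qed
  then have "u \<zeta> \<le> A + \<alpha> * (ln (cmod \<zeta>) - ln \<rho>1)" unfolding m_def by (simp add: algebra_simps)
  moreover have "ln (cmod \<zeta> / \<rho>1) = ln (cmod \<zeta>) - ln \<rho>1"
  proof -
    have "cmod \<zeta> > 0" using r1 z by linarith
    then show ?thesis using r1 by (subst ln_div) auto
  qed
  moreover have "ln (\<rho>2 / \<rho>1) = L" using r1 r2 by (simp add: ln_div L_def)
  ultimately show ?thesis by (simp add: \<alpha>_def)
qed

lemma norm_smult_cvec:
  fixes v :: "complex ^ 'n"
  shows "norm (c *s v) = cmod c * norm v"
  unfolding norm_vec_def by (simp add: L2_set_right_distrib norm_mult)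

lemma psh_line:
  fixes f :: "complex ^ 'n \<Rightarrow> real"
  assumes "psh f"
  shows "subh (\<lambda>\<zeta>. f (x + \<zeta> *s w))"
  unfolding subh_def
proof (intro conjI allI)
  fix a b :: complex
  have eq: "x + (a + exp (\<i> * of_real \<theta>) * b) *s w = (x + a *s w) + exp (\<i> * of_real \<theta>) *s (b *s w)" for \<theta>
    by (simp add: vector_sadd_rdistrib vector_smult_assoc add.assoc)
  have "psh f" by fact
  then have H: "(\<lambda>\<theta>. f ((x + a *s w) + exp (\<i> * of_real \<theta>) *s (b *s w))) integrable_on {0..2*pi} \<and>
     f (x + a *s w) \<le> (1 / (2*pi)) * integral {0..2*pi} (\<lambda>\<theta>. f ((x + a *s w) + exp (\<i> * of_real \<theta>) *s (b *s w)))"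
    unfolding psh_def by blast
  show "(\<lambda>\<theta>. f (x + (a + exp (\<i> * of_real \<theta>) * b) *s w)) integrable_on {0..2*pi}"
    using H by (simp only: eq)
  show "f (x + a *s w) \<le> 1 / (2*pi) * integral {0..2*pi} (\<lambda>\<theta>. f (x + (a + exp (\<i> * of_real \<theta>) * b) *s w))"
    using H by (simp only: eq)
next
  fix z :: complex
  show "usc_at (\<lambda>\<zeta>. f (x + \<zeta> *s w)) z"
    unfolding usc_at_def
  proof (intro allI impI)
    fix e :: real assume e: "e > 0"
    let ?g = "\<lambda>\<zeta>. x + \<zeta> *s w"
    have "eventually (\<lambda>y. f y < f (?g z) + e) (at (?g z))"
      using assms e unfolding psh_def upper_semicont_def by blast
    then have "eventually (\<lambda>y. y \<noteq> ?g z \<longrightarrow> y \<in> UNIV \<longrightarrow> f y < f (?g z) + e) (nhds (?g z))"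
      unfolding eventually_at_filter .
    then have N: "eventually (\<lambda>y. f y < f (?g z) + e) (nhds (?g z))"
      by (rule eventually_mono) (use e in auto)
    have "((\<lambda>\<zeta>. (\<zeta> - z) *s w) \<longlongrightarrow> 0) (at z)"
    proof -
      have "((\<lambda>\<zeta>. cmod (\<zeta> - z) * norm w) \<longlongrightarrow> cmod (z - z) * norm w) (at z)"
        by (intro tendsto_intros)
      then have "((\<lambda>\<zeta>. norm ((\<zeta> - z) *s w)) \<longlongrightarrow> 0) (at z)"
        unfolding norm_smult_cvec by simp
      then show ?thesis by (simp add: tendsto_norm_zero_iff)
    qed
    then have "((\<lambda>\<zeta>. ?g z + (\<zeta> - z) *s w) \<longlongrightarrow> ?g z + 0) (at z)"
      by (intro tendsto_intros)
    moreover have "?g z + (\<zeta> - z) *s w = ?g \<zeta>" for \<zeta>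
      by (simp add: vector_sub_rdistrib)
    ultimately have "(?g \<longlongrightarrow> ?g z) (at z)" by simp
    from filterlim_iff[THEN iffD1, OF this, rule_format, OF N]
    show "eventually (\<lambda>\<zeta>. f (x + \<zeta> *s w) < f (x + z *s w) + e) (at z)" .
  qed
qed

lemma TC:
  fixes f :: "complex ^ 'n \<Rightarrow> real"
  assumes pf: "psh f" and r1: "0 < \<rho>1" and r12: "\<rho>1 < \<rho>2"
    and bd1: "\<And>y. norm (y - x) = \<rho>1 \<Longrightarrow> f y \<le> A"
    and bd2: "\<And>y. norm (y - x) = \<rho>2 \<Longrightarrow> f y \<le> B"
    and y: "\<rho>1 \<le> norm (y - x)" "norm (y - x) \<le> \<rho>2"
  shows "f y \<le> A + (B - A) * ln (norm (y - x) / \<rho>1) / ln (\<rho>2 / \<rho>1)"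
proof -
  define d where "d = norm (y - x)"
  have dp: "d > 0" using r1 y unfolding d_def by linarith
  define w where "w = complex_of_real (1/d) *s (y - x)"
  have nw: "norm w = 1" unfolding w_def norm_smult_cvec using dp by (simp add: d_def norm_divide)
  have yx: "x + complex_of_real d *s w = y" using dp
    by (simp add: w_def vector_smult_assoc)
  have nz: "norm ((x + \<zeta> *s w) - x) = cmod \<zeta>" for \<zeta> by (simp add: norm_smult_cvec nw)
  have "(\<lambda>\<zeta>. f (x + \<zeta> *s w)) (complex_of_real d) \<le> A + (B - A) * ln (cmod (complex_of_real d) / \<rho>1) / ln (\<rho>2 / \<rho>1)"
    by (rule MP[OF psh_line[OF pf] r1 r12]) (use bd1 bd2 nz y dp d_def in auto)
  then show ?thesis using yx dp by (simp add: d_def)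
qed

lemma psh_bdd:
  fixes f :: "complex ^ 'n \<Rightarrow> real"
  assumes "psh f"
  shows "bdd_above (f ` ball x \<rho>)"
proof (cases "cball x \<rho> = {}")
  case True
  then show ?thesis using ball_subset_cball[of x \<rho>] by (metis bdd_above_empty image_empty subset_empty)
next
  case False
  have "usc_at f z" for z using assms unfolding psh_def upper_semicont_def usc_at_def by blast
  then obtain z where "z \<in> cball x \<rho>" "\<And>w. w \<in> cball x \<rho> \<Longrightarrow> f w \<le> f z"
    using usc_max[OF compact_cball False] by blast
  then show ?thesis using ball_subset_cball by (intro bdd_aboveI[of _ "f z"]) blast
qed

lemma step:
  fixes f :: "complex ^ 'n \<Rightarrow> real"
  assumes pf: "psh f" and neg: "\<And>y. norm y < r \<Longrightarrow> f y \<le> 0" and r: "r > 1"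
    and dd: "\<delta> = (r - 1) / 4" and x: "norm x < 1" and fp: "f p \<ge> - K" and K: "K \<ge> 0"
    and px: "norm (p - x) \<le> 2 * \<delta>"
  shows "\<exists>p'. norm (p' - x) < \<delta> \<and> f p' \<ge> - ((ln 6 / ln (3/2)) * K + 1)"
proof -
  define \<gamma> where "\<gamma> = ln 6 / ln (3/2 :: real)"
  have l32: "ln (3/2::real) > 0" by simp
  have l6: "ln (6::real) \<ge> ln (3/2)" by simp
  have g1: "\<gamma> \<ge> 1" unfolding \<gamma>_def using l32 l6 by simp
  have dp: "\<delta> > 0" using r dd by simp
  show ?thesis
  proof (cases "norm (p - x) < \<delta>")
    case True
    have "\<gamma> * K \<ge> 1 * K" using g1 K by (intro mult_right_mono) auto
    then show ?thesis using True fp unfolding \<gamma>_def[symmetric] by (intro exI[of _ p]) auto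
  next
    case False
    define A where "A = Sup (f ` ball x \<delta>)"
    have bdd: "bdd_above (f ` ball x \<delta>)" by (rule psh_bdd[OF pf])
    have hA: "f y \<le> A" if "norm (y - x) < \<delta>" for y
      unfolding A_def using that by (intro cSUP_upper bdd) (simp add: dist_norm norm_minus_commute)
    have "norm y < r" if "y \<in> ball x \<delta>" for y
    proof -
      have "norm y \<le> norm x + norm (y - x)" using norm_triangle_ineq[of x "y - x"] by simp
      moreover have "norm (y - x) < \<delta>" using that by (simp add: dist_norm norm_minus_commute)
      ultimately have "norm y < 1 + \<delta>" using x by linarith
      moreover have "1 + \<delta> < r" using dd r by simp
      ultimately show ?thesis by linarith
    qed
    then have A0: "A \<le> 0" unfolding A_def using dp by (intro cSUP_least) (auto intro: neg)
    have "f p \<le> A + (0 - A) * ln (norm (p - x) / (\<delta>/2)) / ln (3*\<delta> / (\<delta>/2))"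
    proof (rule TC[OF pf])
      show "0 < \<delta>/2" "\<delta>/2 < 3*\<delta>" using dp by auto
      show "f y \<le> A" if "norm (y - x) = \<delta>/2" for y using that dp by (intro hA) auto
      show "f y \<le> 0" if "norm (y - x) = 3*\<delta>" for y
      proof (rule neg)
        have "norm y \<le> norm x + norm (y - x)" using norm_triangle_ineq[of x "y - x"] by simp
        moreover have "1 + 3 * \<delta> < r" using dd r by simp
        ultimately show "norm y < r" using that x by linarith
      qed
      show "\<delta>/2 \<le> norm (p - x)" "norm (p - x) \<le> 3*\<delta>" using False px dp by auto
    qed
    moreover have "3*\<delta> / (\<delta>/2) = 6" using dp by simp
    moreover have L1: "ln (norm (p - x) / (\<delta>/2)) \<le> ln 4"
    proof -
      have "norm (p - x) / (\<delta>/2) \<le> 4" using px dp by (simp add: divide_le_eq)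
      moreover have "norm (p - x) / (\<delta>/2) > 0" by (intro divide_pos_pos) (use False dp in linarith)+
      ultimately show ?thesis by simp
    qed
    ultimately have "f p \<le> A + (- A) * ln (norm (p - x) / (\<delta>/2)) / ln 6" by simp
    moreover have "(- A) * ln (norm (p - x) / (\<delta>/2)) \<le> (- A) * ln 4"
      using A0 L1 by (intro mult_left_mono) auto
    ultimately have "f p \<le> A + (- A) * ln 4 / ln 6"
      by (smt (verit, best) divide_right_mono ln_gt_zero_iff)
    moreover have "ln 6 - ln 4 = ln (3/2::real)"
    proof -
      have "ln (6/4::real) = ln 6 - ln 4" by (rule ln_divide_pos) auto
      then show ?thesis by simp
    qed
    moreover have "A + (- A) * ln 4 / ln 6 = A * (ln 6 - ln 4) / ln 6"
      using l32 l6 by (simp add: field_simps)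
    ultimately have "f p \<le> A * ln (3/2) / ln 6" by simp
    with fp have "- K \<le> A * ln (3/2) / ln 6" by linarith
    then have "- K * ln 6 \<le> A * ln (3/2)" by (simp add: field_simps)
    then have AK: "- (K * ln 6 / ln (3/2)) \<le> A" using l32 by (simp add: field_simps)
    have "\<gamma> * K = K * ln 6 / ln (3/2)" by (simp add: \<gamma>_def)
    then have "- (\<gamma> * K + 1) < A" using AK by linarith
    then obtain y where y: "y \<in> ball x \<delta>" "- (\<gamma> * K + 1) < f y"
      unfolding A_def using less_cSUP_iff[of "ball x \<delta>" f] bdd dp by auto
    then show ?thesis unfolding \<gamma>_def
      by (intro exI[of _ y]) (auto simp: dist_norm norm_minus_commute)
  qed
qed

lemma chain:
  fixes f :: "complex ^ 'n \<Rightarrow> real"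
  assumes pf: "psh f" and neg: "\<And>y. norm y < r \<Longrightarrow> f y \<le> 0" and r: "r > 1"
    and dd: "\<delta> = (r - 1) / 4" and z0: "norm z0 < 1" and fz0: "f z0 \<ge> -2"
    and N: "real N \<ge> 2 / \<delta>" "N \<ge> 1" and x: "norm x < 1"
  shows "\<exists>p. norm (p - x) < \<delta> \<and> f p \<ge> - (2 * (ln 6 / ln (3/2) + 1) ^ N)"
proof -
  define \<gamma> where "\<gamma> = ln 6 / ln (3/2 :: real)"
  have l32: "ln (3/2::real) > 0" by simp
  have l6: "ln (6::real) \<ge> ln (3/2)" by simp
  have g1: "\<gamma> \<ge> 1" unfolding \<gamma>_def using l32 l6 by simp
  have dp: "\<delta> > 0" using r dd by simp
  define xk where "xk = (\<lambda>k::nat. z0 + (real k / real N) *\<^sub>R (x - z0))"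
  have Np: "real N > 0" using N by simp
  have step2: "2 / real N \<le> \<delta>" using N(1) dp Np by (simp add: divide_le_eq mult.commute pos_divide_le_eq)
  have "\<forall>k. k \<le> N \<longrightarrow> (\<exists>p. norm (p - xk k) < \<delta> \<and> f p \<ge> - (2 * (\<gamma> + 1) ^ k))"
  proof (intro allI)
    fix k show "k \<le> N \<longrightarrow> (\<exists>p. norm (p - xk k) < \<delta> \<and> f p \<ge> - (2 * (\<gamma> + 1) ^ k))"
    proof (induction k)
      case 0
      show ?case using dp fz0 by (intro impI exI[of _ z0]) (simp add: xk_def)
    next
      case (Suc k)
      show ?case
      proof
        assume kN: "Suc k \<le> N"
        then obtain p where p: "norm (p - xk k) < \<delta>" "f p \<ge> - (2 * (\<gamma> + 1) ^ k)" using Suc.IH by auto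
        define lam where "lam = real (Suc k) / real N"
        have lam: "0 \<le> lam" "lam \<le> 1" using kN Np by (auto simp: lam_def divide_le_eq)
        have xs: "xk (Suc k) = (1 - lam) *\<^sub>R z0 + lam *\<^sub>R x"
          unfolding xk_def lam_def by (simp add: algebra_simps)
        have "xk (Suc k) \<in> ball 0 1"
          unfolding xs by (rule convexD[OF convex_ball]) (use z0 x lam in auto)
        then have nxs: "norm (xk (Suc k)) < 1" by simp
        have "xk (Suc k) - xk k = (1 / real N) *\<^sub>R (x - z0)"
          unfolding xk_def by (simp add: algebra_simps add_divide_distrib)
        moreover have "norm (x - z0) < 2"
          using norm_triangle_ineq4[of x z0] x z0 by linarith
        ultimately have "norm (xk (Suc k) - xk k) \<le> 2 / real N"
          using Np by (simp add: divide_simps)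
        then have "norm (p - xk (Suc k)) \<le> 2 * \<delta>"
          using norm_triangle_ineq[of "p - xk k" "xk k - xk (Suc k)"] p(1) step2
          by (simp add: norm_minus_commute)
        have K0: "2 * (\<gamma> + 1) ^ k \<ge> 1"
        proof -
          have "(\<gamma> + 1) ^ k \<ge> 1" using g1 by (intro one_le_power) simp
          then show ?thesis by simp
        qed
        obtain p' where p': "norm (p' - xk (Suc k)) < \<delta>" "f p' \<ge> - (\<gamma> * (2 * (\<gamma> + 1) ^ k) + 1)"
          using step[OF pf neg r dd nxs p(2) _ \<open>norm (p - xk (Suc k)) \<le> 2 * \<delta>\<close>] K0 unfolding \<gamma>_def by auto
        have "\<gamma> * (2 * (\<gamma> + 1) ^ k) + 1 \<le> 2 * (\<gamma> + 1) ^ Suc k"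
          using K0 by (simp add: algebra_simps)
        then show "\<exists>p. norm (p - xk (Suc k)) < \<delta> \<and> f p \<ge> - (2 * (\<gamma> + 1) ^ Suc k)"
          using p' by (intro exI[of _ p']) auto
      qed
    qed
  qed
  then obtain p where "norm (p - xk N) < \<delta>" "f p \<ge> - (2 * (\<gamma> + 1) ^ N)" by auto
  moreover have "xk N = x" using Np by (simp add: xk_def)
  ultimately show ?thesis unfolding \<gamma>_def by auto
qed

theorem proposition2p5:
  fixes r :: real
  assumes "r > 1"
  shows "\<exists>c::real. \<forall>a::real. a > 1 \<longrightarrow>
           (\<forall>(f :: complex ^ 'n \<Rightarrow> real) \<in> F_class r. \<forall>s \<in> {1..a}. \<forall>x t.
              t > 0 \<and> ball x t \<subseteq> ball x (a * t) \<and> ball x (a * t) \<subseteq> ball 0 1 \<longrightarrow>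
              Sup (f ` ball x (s * t)) \<le> c * ln s + Sup (f ` ball x t))"
proof -
  have r: "r > 1" by fact
  define \<delta> where "\<delta> = (r - 1) / 4"
  have dp: "\<delta> > 0" using r by (simp add: \<delta>_def)
  define N where "N = nat \<lceil>2 / \<delta>\<rceil> + 1"
  have N: "real N \<ge> 2 / \<delta>" "N \<ge> 1" unfolding N_def by (auto, linarith)
  define Kc where "Kc = 2 * (ln 6 / ln (3/2 :: real) + 1) ^ N"
  have Kc0: "Kc \<ge> 0" unfolding Kc_def by simp
  define m where "m = min (ln 2) (ln (1 + 2 * \<delta>))"
  have mp: "m > 0" using dp by (simp add: m_def)
  have ml: "m \<le> ln 2" "m \<le> ln (1 + 2 * \<delta>)" by (auto simp: m_def)
  define c where "c = Kc * (1 / m + 1 / ln 2)"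
  have c0: "c \<ge> 0" using Kc0 mp by (simp add: c_def)
  show ?thesis
  proof (intro exI[of _ c] allI impI ballI conjI)
    fix a :: real and f :: "complex ^ 'n \<Rightarrow> real" and s :: real and x :: "complex ^ 'n" and t :: real
    assume a: "a > 1" and fF: "f \<in> F_class r" and s: "s \<in> {1..a}"
      and H: "t > 0 \<and> ball x t \<subseteq> ball x (a * t) \<and> ball x (a * t) \<subseteq> ball 0 1"
    have t: "t > 0" using H by simp
    have pf: "psh f" and S0: "Sup (f ` ball 0 r) = 0" and S1: "Sup (f ` ball 0 1) \<ge> -1"
      using fF by (auto simp: F_class_def)
    have neg: "f y \<le> 0" if "norm y < r" for y
    proof -
      have "f y \<le> Sup (f ` ball 0 r)" using that by (intro cSUP_upper psh_bdd[OF pf]) auto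
      then show ?thesis using S0 by simp
    qed
    have "-2 < Sup (f ` ball 0 1)" using S1 by simp
    then obtain z0 where z0: "z0 \<in> ball 0 1" "-2 < f z0"
      using less_cSUP_iff[of "ball 0 1" f] psh_bdd[OF pf] by auto
    have at0: "a * t > 0" using a t by simp
    have "dist x 0 + a * t \<le> 1" using H at0 ball_subset_ball_iff[of x "a*t" 0 1] by auto
    then have xat: "norm x + a * t \<le> 1" by simp
    have "t < a * t" using a t by simp
    then have tx: "t < 1 - norm x" using xat by linarith
    have x1: "norm x < 1" using tx t by linarith
    obtain p where p: "norm (p - x) < \<delta>" "f p \<ge> - Kc"
      using chain[OF pf neg r \<delta>_def _ _ N x1, of z0] z0 unfolding Kc_def by auto
    define \<rho>2 where "\<rho>2 = (1 - norm x) + 2 * \<delta>"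
    have r2t: "t < \<rho>2" using tx dp by (simp add: \<rho>2_def)
    have bd2: "f y \<le> 0" if "norm (y - x) = \<rho>2" for y
    proof (rule neg)
      have "norm y \<le> norm x + norm (y - x)" using norm_triangle_ineq[of x "y - x"] by simp
      moreover have "1 + 2 * \<delta> < r" using r unfolding \<delta>_def by (simp add: field_simps)
      ultimately show "norm y < r" using that by (simp add: \<rho>2_def)
    qed
    define A where "A = Sup (f ` ball x t)"
    have bdd: "bdd_above (f ` ball x t)" by (rule psh_bdd[OF pf])
    have hA: "f y \<le> A" if "norm (y - x) < t" for y
      unfolding A_def using that by (intro cSUP_upper bdd) (simp add: dist_norm norm_minus_commute)
    have A0: "A \<le> 0"
      unfolding A_def
    proof (rule cSUP_least)
      show "ball x t \<noteq> {}" using t by simp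
      fix y assume "y \<in> ball x t"
      then have "norm (y - x) < t" by (simp add: dist_norm norm_minus_commute)
      moreover have "norm y \<le> norm x + norm (y - x)" using norm_triangle_ineq[of x "y - x"] by simp
      ultimately have "norm y < r" using tx r by linarith
      then show "f y \<le> 0" by (rule neg)
    qed
    define L where "L = ln (\<rho>2 / t)"
    have Lm: "L \<ge> m"
    proof -
      have "t * (1 + 2 * \<delta>) \<le> \<rho>2"
      proof -
        have t1: "t \<le> 1" using tx norm_ge_zero[of x] by linarith
        have "t * (2 * \<delta>) \<le> 1 * (2 * \<delta>)" using t1 dp by (intro mult_right_mono) auto
        then show ?thesis using tx by (simp add: \<rho>2_def algebra_simps)
      qed
      then have "1 + 2 * \<delta> \<le> \<rho>2 / t" using t by (simp add: le_divide_eq mult.commute)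
      then have "ln (1 + 2 * \<delta>) \<le> L" unfolding L_def using dp by simp
      then show ?thesis using ml by linarith
    qed
    have Lp: "L > 0" using Lm mp by linarith
    have LB: "- A \<le> c * L"
    proof (cases "norm (p - x) < t")
      case True
      then have "- A \<le> Kc" using hA[OF True] p by linarith
      also have "Kc \<le> Kc * (L / m)"
      proof -
        have "1 \<le> L / m" using Lm mp by (simp add: le_divide_eq)
        from mult_left_mono[OF this Kc0] show ?thesis by simp
      qed
      also have "\<dots> \<le> c * L" unfolding c_def using Kc0 Lp mp by (simp add: field_simps)
      finally show ?thesis .
    next
      case False
      define q where "q = norm (p - x)"
      have qt: "t \<le> q" using False by (simp add: q_def)
      have qp: "q > 0" using qt t by linarith
      have q2: "q \<le> \<rho>2" using p dp tx t unfolding q_def \<rho>2_def by linarith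
      have fpq: "f p \<le> A + (0 - A) * ln (q / (t/2)) / ln (\<rho>2 / (t/2))"
        unfolding q_def
        by (rule TC[OF pf]) (use t r2t hA bd2 qt q2 q_def in auto)
      have ln2p: "ln (2::real) > 0" by simp
      have r2p: "\<rho>2 > 0" using t r2t by linarith
      define P where "P = ln (\<rho>2 / q)"
      define L2 where "L2 = ln 2 + L"
      have lt2: "ln (t/2) = ln t - ln 2" using t by (rule ln_divide_pos) simp
      have e1: "ln (\<rho>2 / (t/2)) = L2"
        unfolding L2_def L_def using ln_divide_pos[of \<rho>2 "t/2"] ln_divide_pos[of \<rho>2 t] r2p t lt2 by simp
      have e2: "ln (q / (t/2)) = L2 - P"
        unfolding L2_def L_def P_def using ln_divide_pos[of q "t/2"] ln_divide_pos[of \<rho>2 t] ln_divide_pos[of \<rho>2 q] r2p t qp lt2 by simp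
      have L2p: "L2 > 0" using Lp ln2p unfolding L2_def by linarith
      have P2: "P \<ge> ln 2"
      proof -
        have "2 * q \<le> \<rho>2" using p dp tx t unfolding q_def \<rho>2_def by linarith
        then have "2 \<le> \<rho>2 / q" using qp by (simp add: le_divide_eq)
        moreover have "0 < \<rho>2 / q" using r2p qp by simp
        ultimately show ?thesis unfolding P_def by simp
      qed
      have "f p \<le> A + (0 - A) * (L2 - P) / L2" using fpq unfolding e1 e2 .
      also have "\<dots> = A * P / L2" using L2p by (simp add: field_simps)
      finally have "- Kc \<le> A * P / L2" using p by linarith
      then have k1: "- Kc * L2 \<le> A * P" using L2p by (simp add: le_divide_eq)
      have k2: "(- A) * ln 2 \<le> (- A) * P" using A0 P2 by (intro mult_left_mono) auto
      have "(- A) * ln 2 \<le> Kc * L2" using k1 k2 by (simp add: algebra_simps)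
      then have "- A \<le> Kc * L2 / ln 2" by (subst pos_le_divide_eq[OF ln2p])
      also have "\<dots> = Kc * (1 + L / ln 2)" unfolding L2_def using ln2p by (simp add: field_simps)
      also have "\<dots> \<le> Kc * (L / m + L / ln 2)"
      proof -
        have "1 \<le> L / m" using Lm mp by (simp add: divide_simps)
        then show ?thesis using Kc0 by (intro mult_left_mono) auto
      qed
      also have "\<dots> = c * L" unfolding c_def using mp ln2p by (simp add: field_simps)
      finally show ?thesis .
    qed
    have s1: "s \<ge> 1" "s \<le> a" using s by auto
    have lns: "ln s \<ge> 0" using s1 by simp
    show "Sup (f ` ball x (s * t)) \<le> c * ln s + Sup (f ` ball x t)"
      unfolding A_def[symmetric]
    proof (rule cSUP_least)
      have "s * t > 0" using s1 t by (intro mult_pos_pos) auto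
      then show "ball x (s * t) \<noteq> {}" by simp
      fix y assume "y \<in> ball x (s * t)"
      then have yst: "norm (y - x) < s * t" by (simp add: dist_norm norm_minus_commute)
      show "f y \<le> c * ln s + A"
      proof (cases "norm (y - x) < t")
        case True
        then show ?thesis using hA[OF True] mult_nonneg_nonneg[OF c0 lns] by linarith
      next
        case False
        define d where "d = norm (y - x)"
        have dt: "t \<le> d" using False by (simp add: d_def)
        have dp': "d > 0" using dt t by linarith
        define t' where "t' = d / s"
        have s0: "s > 0" using s1 by simp
        have t'p: "t' > 0" using dp' s0 by (simp add: t'_def)
        have t't: "t' < t" using yst s0 unfolding t'_def d_def by (simp add: divide_less_eq mult.commute)
        have t'd: "t' \<le> d"
        proof -
          have "d * 1 \<le> d * s" by (rule mult_left_mono) (use s1 dp' in auto)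
          then show ?thesis unfolding t'_def by (subst pos_divide_le_eq[OF s0]) simp
        qed
        have d2: "d \<le> \<rho>2"
        proof -
          have "s * t \<le> a * t" using s1 t by (intro mult_right_mono) auto
          then show ?thesis using yst xat dp unfolding d_def \<rho>2_def by linarith
        qed
        have "f y \<le> A + (0 - A) * ln (d / t') / ln (\<rho>2 / t')"
          unfolding d_def
          by (rule TC[OF pf]) (use t'p t't r2t hA bd2 t'd d2 d_def in auto)
        moreover have "d / t' = s" using dp' s0 by (simp add: t'_def)
        ultimately have fy: "f y \<le> A + (0 - A) * ln s / ln (\<rho>2 / t')" by simp
        have r2p: "\<rho>2 > 0" using t r2t by linarith
        have LL: "L \<le> ln (\<rho>2 / t')"
        proof -
          have "\<rho>2 / t \<le> \<rho>2 / t'" by (rule divide_left_mono) (use t'p t't r2p in auto)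
          moreover have "0 < \<rho>2 / t" using r2p t by simp
          moreover have "0 < \<rho>2 / t'" using r2p t'p by simp
          ultimately show ?thesis unfolding L_def by simp
        qed
        have nA: "0 \<le> (0 - A) * ln s" using A0 lns by (intro mult_nonneg_nonneg) auto
        have "(0 - A) * ln s / ln (\<rho>2 / t') \<le> (0 - A) * ln s / L"
          by (rule divide_left_mono[OF LL nA]) (use Lp LL in \<open>simp add: mult_pos_pos\<close>)
        also have "\<dots> \<le> (c * L) * ln s / L"
          using LB lns Lp by (intro divide_right_mono mult_right_mono) auto
        also have "\<dots> = c * ln s" using Lp by simp
        finally show ?thesis using fy by linarith
      qed
    qed
  qed
qed

end
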